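(* Let $r,t,t_1,\dots,t_r$ be positive integers with $t_1+t_2+\dots+t_r=t+r-1$, and let $H$ be an $r$-partite $r$-graph with $|E(H)|>\frac{t-1}{r}\,|\partial H|$. Then there is an $r$-graph $H'\subseteq H$ with at least one edge such that $\delta_{(1,2,\dots,r)}(H')\ge (t_1,t_2,\dots,t_r)$.
   Context: An $r$-graph is an $r$-uniform hypergraph. An $r$-graph is $r$-partite if its vertex set can be partitioned into $r$ classes such that every edge contains exactly one vertex from each class. The shadow $\partial H$ of an $r$-graph $H$ is the set of all $(r-1)$-element sets contained in some edge of $H$. For an $r$-partite $r$-graph $H$ (with partition inherited from the ambient $r$-partition), we write $\delta_{(1,2,\dots,r)}(H)\ge (t_1,\dots,t_r)$ if the partition classes can be labeled $V_1,\dots,V_r$ so that for each $i\in[r]$, every $S\in\partial H$ with $S\cap V_i=\emptyset$ is contained in at least $t_i$ edges of $H$. *)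

theory Defs
  imports Complex_Main
begin

definition r_partition :: "nat \<Rightarrow> (nat \<Rightarrow> 'a set) \<Rightarrow> 'a set set \<Rightarrow> bool" where
  "r_partition r P H \<longleftrightarrow>
     (\<forall>i<r. \<forall>j<r. i \<noteq> j \<longrightarrow> P i \<inter> P j = {}) \<and>
     (\<forall>e\<in>H. e \<subseteq> (\<Union>i<r. P i) \<and> (\<forall>i<r. card (e \<inter> P i) = 1))"

definition shadow :: "nat \<Rightarrow> 'a set set \<Rightarrow> 'a set set" where
  "shadow r H = {S. \<exists>e\<in>H. S \<subseteq> e \<and> finite S \<and> card S = r - 1}"

definition codeg :: "'a set set \<Rightarrow> 'a set \<Rightarrow> nat" where
  "codeg H S = card {e\<in>H. S \<subseteq> e}"

text \<open>delta_(1,...,r)(H) >= (t 0, ..., t (r-1)) with respect to the ambient partition P: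
  the classes can be labeled (via a bijection sigma of the index set) so that every
  shadow set missing the i-th labeled class lies in at least t i edges.\<close>
definition min_partite_codeg_ge ::
    "nat \<Rightarrow> (nat \<Rightarrow> 'a set) \<Rightarrow> 'a set set \<Rightarrow> (nat \<Rightarrow> nat) \<Rightarrow> bool" where
  "min_partite_codeg_ge r P H t \<longleftrightarrow>
     (\<exists>\<sigma>. bij_betw \<sigma> {..<r} {..<r} \<and>
        (\<forall>i<r. \<forall>S\<in>shadow r H. S \<inter> P (\<sigma> i) = {} \<longrightarrow> codeg H S \<ge> t i))"

end

theory Submission
  imports Defs
begin

lemma rot_bij:
  assumes "k < (r::nat)"
  shows "bij_betw (\<lambda>x. (x + k) mod r) {..<r} {..<r}"
proof -
  have inv1: "((x + k) mod r + (r - k)) mod r = x" if "x < r" for x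
  proof -
    have "((x + k) mod r + (r - k)) mod r = (x + k + (r - k)) mod r" by (simp add: mod_add_left_eq)
    also have "x + k + (r - k) = x + r" using assms by simp
    finally show ?thesis using that by simp
  qed
  have inv2: "((y + (r - k)) mod r + k) mod r = y" if "y < r" for y
  proof -
    have "((y + (r - k)) mod r + k) mod r = (y + (r - k) + k) mod r" by (simp add: mod_add_left_eq)
    also have "y + (r - k) + k = y + r" using assms by simp
    finally show ?thesis using that by simp
  qed
  show ?thesis
    unfolding bij_betw_def
  proof
    show "inj_on (\<lambda>x. (x + k) mod r) {..<r}"
      by (metis (no_types, lifting) inj_onI inv1 lessThan_iff)
    show "(\<lambda>x. (x + k) mod r) ` {..<r} = {..<r}"
    proof
      show "(\<lambda>x. (x + k) mod r) ` {..<r} \<subseteq> {..<r}" using assms by auto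
      show "{..<r} \<subseteq> (\<lambda>x. (x + k) mod r) ` {..<r}"
      proof
        fix y assume "y \<in> {..<r}"
        then have "y = ((y + (r - k)) mod r + k) mod r" "(y + (r - k)) mod r \<in> {..<r}"
          using inv2 assms by auto
        then show "y \<in> (\<lambda>x. (x + k) mod r) ` {..<r}" by blast
      qed
    qed
  qed
qed

lemma edge_card:
  assumes "r_partition r P H" "e \<in> H"
  shows "finite e" "card e = r"
proof -
  have disj: "\<forall>i<r. \<forall>j<r. i \<noteq> j \<longrightarrow> P i \<inter> P j = {}"
    and sub: "e \<subseteq> (\<Union>i<r. P i)" and c1: "\<forall>i<r. card (e \<inter> P i) = 1"
    using assms unfolding r_partition_def by auto
  have eq: "e = (\<Union>i\<in>{..<r}. e \<inter> P i)" using sub by auto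
  have fin: "\<forall>i\<in>{..<r}. finite (e \<inter> P i)" using c1 by (metis card.infinite lessThan_iff zero_neq_one)
  show "finite e" using eq fin by (metis finite_UN_I finite_lessThan)
  have "card (\<Union>i\<in>{..<r}. e \<inter> P i) = (\<Sum>i\<in>{..<r}. card (e \<inter> P i))"
    apply (rule card_UN_disjoint) using fin disj by auto
  also have "\<dots> = r" using c1 by simp
  finally show "card e = r" using eq by simp
qed

lemma miss_le1:
  assumes "r_partition r P H" "S \<in> shadow r H"
  shows "card {j. j < r \<and> S \<inter> P j = {}} \<le> 1"
proof -
  obtain e where e: "e \<in> H" "S \<subseteq> e" "card S = r - 1" using assms(2) unfolding shadow_def by auto
  have disj: "\<forall>i<r. \<forall>j<r. i \<noteq> j \<longrightarrow> P i \<inter> P j = {}"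
    and c1: "\<forall>i<r. card (e \<inter> P i) = 1"
    using assms e unfolding r_partition_def by auto
  have fe: "finite e" and ce: "card e = r" using edge_card assms(1) e(1) by auto
  have "\<forall>a\<in>{j. j < r \<and> S \<inter> P j = {}}. \<forall>b\<in>{j. j < r \<and> S \<inter> P j = {}}. a = b"
  proof (intro ballI, rule ccontr)
    fix a b assume a: "a \<in> {j. j < r \<and> S \<inter> P j = {}}" and b: "b \<in> {j. j < r \<and> S \<inter> P j = {}}"
      and ne: "a \<noteq> b"
    obtain x where x: "e \<inter> P a = {x}" using c1 a by (metis card_1_singletonE mem_Collect_eq)
    obtain y where y: "e \<inter> P b = {y}" using c1 b by (metis card_1_singletonE mem_Collect_eq)
    have xy: "x \<noteq> y" using disj a b ne x y by blast
    have "S \<subseteq> e - {x, y}" using e(2) a b x y by blast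
    hence "card S \<le> card (e - {x,y})" using fe by (simp add: card_mono)
    also have "card (e - {x,y}) = r - 2" using x y xy fe ce
    proof -
      have "{x,y} \<subseteq> e" using x y by blast
      then have "card (e - {x,y}) = card e - card {x,y}" using fe by (meson card_Diff_subset finite_subset)
      then show ?thesis using xy ce by simp
    qed
    finally have "r - 1 \<le> r - 2" using e(3) by simp
    moreover have "r \<ge> 2" using a b ne by auto
    ultimately show False by simp
  qed
  then show ?thesis by (simp add: card_le_Suc0_iff_eq)
qed

lemma shadow_finite:
  assumes "finite H" "\<forall>e\<in>H. finite e"
  shows "finite (shadow r H)"
proof -
  have "shadow r H \<subseteq> (\<Union>e\<in>H. Pow e)" unfolding shadow_def by auto
  moreover have "finite (\<Union>e\<in>H. Pow e)" using assms by auto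
  ultimately show ?thesis by (rule finite_subset)
qed

lemma shadow_mono: "H1 \<subseteq> H \<Longrightarrow> shadow r H1 \<subseteq> shadow r H"
  unfolding shadow_def by auto

lemma key:
  fixes f :: "'a set \<Rightarrow> nat"
  assumes "finite H" "\<forall>e\<in>H. finite e"
    and fdef: "\<And>S. f S = (\<Sum>i<r. if S \<inter> P (\<sigma> i) = {} then t i - 1 else 0)"
    and "card H > (\<Sum>S\<in>shadow r H. f S)"
  shows "\<exists>H'. H' \<subseteq> H \<and> H' \<noteq> {} \<and>
           (\<forall>i<r. \<forall>S\<in>shadow r H'. S \<inter> P (\<sigma> i) = {} \<longrightarrow> codeg H' S \<ge> t i)"
  using assms(1,2,4)
proof (induction H rule: finite_psubset_induct)
  case (psubset H)
  show ?case
  proof (cases "\<forall>i<r. \<forall>S\<in>shadow r H. S \<inter> P (\<sigma> i) = {} \<longrightarrow> codeg H S \<ge> t i")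
    case True
    then show ?thesis using psubset.prems(2) by (intro exI[of _ H]) auto
  next
    case False
    then obtain i S where i: "i < r" and S: "S \<in> shadow r H" and miss: "S \<inter> P (\<sigma> i) = {}"
      and low: "codeg H S < t i" by (auto simp: not_le)
    define H1 where "H1 = {e\<in>H. \<not> S \<subseteq> e}"
    obtain e0 where e0: "e0 \<in> H" "S \<subseteq> e0" using S unfolding shadow_def by auto
    have sub: "H1 \<subset> H" using e0 unfolding H1_def by auto
    have fin1: "finite H1" using sub psubset.hyps by (meson finite_subset psubset_imp_subset)
    have cardeq: "card H = card H1 + codeg H S"
    proof -
      have "H = H1 \<union> {e\<in>H. S \<subseteq> e}" "H1 \<inter> {e\<in>H. S \<subseteq> e} = {}" unfolding H1_def by auto
      moreover have "finite {e\<in>H. S \<subseteq> e}" using psubset.hyps by simp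
      ultimately show ?thesis unfolding codeg_def using fin1
        by (metis card_Un_disjoint)
    qed
    have fsh: "finite (shadow r H)" using shadow_finite psubset.hyps psubset.prems(1) by blast
    have sh1: "shadow r H1 \<subseteq> shadow r H - {S}"
    proof -
      have "shadow r H1 \<subseteq> shadow r H" using sub shadow_mono by blast
      moreover have "S \<notin> shadow r H1" unfolding shadow_def H1_def by auto
      ultimately show ?thesis by blast
    qed
    have "(\<Sum>S\<in>shadow r H1. f S) \<le> (\<Sum>S\<in>shadow r H - {S}. f S)"
      using sh1 fsh by (intro sum_mono2) auto
    moreover have "(\<Sum>S\<in>shadow r H. f S) = f S + (\<Sum>S\<in>shadow r H - {S}. f S)"
      using fsh S by (rule sum.remove)
    ultimately have s1: "(\<Sum>S\<in>shadow r H1. f S) + f S \<le> (\<Sum>S\<in>shadow r H. f S)"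
      by linarith
    have "t i - 1 \<le> f S" unfolding fdef using i miss
       member_le_sum[of i "{..<r}" "\<lambda>i. if S \<inter> P (\<sigma> i) = {} then t i - 1 else 0"] by simp
    then have "codeg H S \<le> f S" using low by linarith
    then have c1: "card H1 > (\<Sum>S\<in>shadow r H1. f S)" using cardeq s1 psubset.prems(2) by linarith
    have fe1: "\<forall>e\<in>H1. finite e" using psubset.prems(1) H1_def by auto
    from psubset.IH[OF sub fe1 c1] obtain H' where "H' \<subseteq> H1" "H' \<noteq> {}"
       "\<forall>i<r. \<forall>S\<in>shadow r H'. S \<inter> P (\<sigma> i) = {} \<longrightarrow> codeg H' S \<ge> t i"
      by blast
    moreover have "H' \<subseteq> H" using \<open>H' \<subseteq> H1\<close> sub by auto
    ultimately show ?thesis by (intro exI[of _ H'] conjI)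
  qed
qed

lemma sum_rot_le:
  fixes c i r :: nat
  assumes "i < r" "card {j. j < r \<and> Q j} \<le> 1"
  shows "(\<Sum>k<r. if Q ((i + k) mod r) then c else 0) \<le> c"
proof -
  have "(\<Sum>k<r. if Q ((i + k) mod r) then c else 0) = (\<Sum>k<r. (\<lambda>j. if Q j then c else 0) ((k + i) mod r))"
    by (intro sum.cong refl) (metis add.commute)
  also have "\<dots> = (\<Sum>j<r. if Q j then c else 0)"
    using rot_bij[OF assms(1)] by (rule sum.reindex_bij_betw)
  also have "\<dots> = (\<Sum>j\<in>{j\<in>{..<r}. Q j}. c)"
    by (rule sum.inter_filter[symmetric]) simp
  also have "\<dots> = card {j. j < r \<and> Q j} * c"
  proof -
    have "{j\<in>{..<r}. Q j} = {j. j < r \<and> Q j}" by auto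
    then show ?thesis by simp
  qed
  also have "\<dots> \<le> c" using assms(2)
    using mult_le_mono1[OF assms(2), of c] by simp
  finally show ?thesis .
qed

theorem lemma2p1:
  fixes r tt :: nat and t :: "nat \<Rightarrow> nat"
    and P :: "nat \<Rightarrow> 'a set" and H :: "'a set set"
  assumes "r > 0" and "tt > 0" and "\<forall>i<r. t i > 0"
    and "(\<Sum>i<r. t i) = tt + r - 1"
    and "finite H" and "r_partition r P H"
    and "real (card H) > (real tt - 1) / real r * real (card (shadow r H))"
  shows "\<exists>H'. H' \<subseteq> H \<and> H' \<noteq> {} \<and> min_partite_codeg_ge r P H' t"
proof -
  have fe: "\<forall>e\<in>H. finite e" using edge_card(1)[OF assms(6)] by blast
  have fsh: "finite (shadow r H)" using shadow_finite assms(5) fe by blast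
  define F where "F k S = (\<Sum>i<r. if S \<inter> P ((i + k) mod r) = {} then t i - 1 else 0)" for k S
  have tsum: "(\<Sum>i<r. t i - 1) = tt - 1"
  proof -
    have "(\<Sum>i<r. t i - 1) = (\<Sum>i<r. t i) - (\<Sum>i<r. (1::nat))"
      using assms(3) by (intro sum_subtractf_nat) auto
    then show ?thesis using assms(4) by simp
  qed
  have perS: "(\<Sum>k<r. F k S) \<le> tt - 1" if S: "S \<in> shadow r H" for S
  proof -
    have "(\<Sum>k<r. F k S) = (\<Sum>i<r. \<Sum>k<r. if S \<inter> P ((i + k) mod r) = {} then t i - 1 else 0)"
      unfolding F_def by (rule sum.swap)
    also have "\<dots> \<le> (\<Sum>i<r. t i - 1)"
      using miss_le1[OF assms(6) S] by (intro sum_mono sum_rot_le) auto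
    finally show ?thesis using tsum by simp
  qed
  have tot: "(\<Sum>k<r. \<Sum>S\<in>shadow r H. F k S) \<le> card (shadow r H) * (tt - 1)"
  proof -
    have "(\<Sum>k<r. \<Sum>S\<in>shadow r H. F k S) = (\<Sum>S\<in>shadow r H. \<Sum>k<r. F k S)"
      by (rule sum.swap)
    also have "\<dots> \<le> (\<Sum>S\<in>shadow r H. tt - 1)" using perS by (intro sum_mono) auto
    finally show ?thesis by simp
  qed
  have big: "real (card (shadow r H) * (tt - 1)) < real (r * card H)"
  proof -
    have "real (card (shadow r H) * (tt - 1)) = (real tt - 1) * real (card (shadow r H))"
      using assms(2) by (simp add: of_nat_diff)
    also have "\<dots> = real r * ((real tt - 1) / real r * real (card (shadow r H)))"
      using assms(1) by simp
    also have "\<dots> < real r * real (card H)"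
      using assms(1,7) by (intro mult_strict_left_mono) auto
    finally show ?thesis by simp
  qed
  then have big': "card (shadow r H) * (tt - 1) < r * card H" by (simp only: of_nat_less_iff)
  have "\<exists>k<r. (\<Sum>S\<in>shadow r H. F k S) < card H"
  proof (rule ccontr)
    assume "\<not> ?thesis"
    then have "\<forall>k\<in>{..<r}. card H \<le> (\<Sum>S\<in>shadow r H. F k S)" by auto
    then have "(\<Sum>k<r. card H) \<le> (\<Sum>k<r. \<Sum>S\<in>shadow r H. F k S)" by (intro sum_mono) auto
    then show False using tot big' by simp
  qed
  then obtain k where k: "k < r" "(\<Sum>S\<in>shadow r H. F k S) < card H" by blast
  obtain H' where H': "H' \<subseteq> H" "H' \<noteq> {}"
    "\<forall>i<r. \<forall>S\<in>shadow r H'. S \<inter> P ((\<lambda>i. (i + k) mod r) i) = {} \<longrightarrow> codeg H' S \<ge> t i"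
    using key[where f="F k" and r=r and P=P and \<sigma>="\<lambda>i. (i + k) mod r" and t=t, OF assms(5) fe F_def k(2)]
    by blast
  have "min_partite_codeg_ge r P H' t"
    unfolding min_partite_codeg_ge_def
    using rot_bij[OF k(1)] H'(3) by blast
  then show ?thesis using H' by blast
qed

end
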